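(* Let $m\geq1$ and let $T$ be a $B$-tree of order $2m+1$ with $n$ keys and height at least $1$, with $n_1$ keys not stored in leaves. For $\pi\in S_n$ producing a history of $T$, let $\pi^{(1)}\in S_{n_1}$ be defined as below. If $\pi,\pi'\in S_n$ produce the same history $(T_1,\dots,T_n=T)$, then $\pi^{(1)}=\pi'^{(1)}$. Consequently there is a well-defined map $\hat\Psi_T$ from the set of histories of $T$ to the set of permutations producing $T^{(1)}$, assigning to a history the permutation $\pi^{(1)}$ for any $\pi$ producing it.
   Context: A $B$-tree of order $2m+1$ is a rooted plane search tree whose nodes contain pairwise distinct keys in increasing left-to-right order (a non-leaf node with $k$ keys has $k+1$ children, the $i$-th child's subtree containing keys between the $(i-1)$-th and $i$-th key), every non-root node has between $m$ and $2m$ keys, the root between $1$ and $2m$, and all leaves have equal depth. Insertion: place the new key in the appropriate leaf; whenever a node has $2m+1$ keys, split it, moving the median key up into the parent and forming two nodes from the $m$ smallest and the $m$ largest keys (creating a new one-key root if the root splits). A permutation $\pi\in S_n$ used as key sequence means inserting $\pi(1),\dots,\pi(n)$ successively starting from the empty tree; it produces the history $(T_1,\dots,T_n)$, where $T_i$ is the tree after $i$ insertions, considered up to isomorphism of rooted plane trees (shape and number of keys per node). $T^{(1)}$ is the tree obtained from $T$ by deleting all leaves. Given $\pi$ producing a history of $T$: let $i_1<\dots<i_{n_1}$ be the times $i$ at which inserting $\pi(i)$ causes the leaf receiving it to split, and $K_{i_j}$ the median key of that leaf (the key moved out of the leaf into its parent at time $i_j$); $\pi^{(1)}\in S_{n_1}$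 is the permutation order-isomorphic to $(K_{i_1},\dots,K_{i_{n_1}})$, i.e. $\pi^{(1)}(a)<\pi^{(1)}(b)$ iff $K_{i_a}<K_{i_b}$. *)

theory Defs
  imports Main
begin

text \<open>B-tree nodes: list of keys (increasing) and list of children (empty for a leaf).
  The empty tree is represented by the key-less leaf Node [] [].\<close>
datatype btree = Node "nat list" "btree list"

text \<open>Shape of a tree: rooted plane tree with number of keys per node
  (this is the tree up to isomorphism).\<close>
datatype shp = SNode nat "shp list"

fun shape :: "btree \<Rightarrow> shp" where
  "shape (Node ks cs) = SNode (length ks) (map shape cs)"

fun is_leaf :: "btree \<Rightarrow> bool" where
  "is_leaf (Node ks cs) = (cs = [])"

fun height :: "btree \<Rightarrow> nat" where
  "height (Node ks cs) = (if cs = [] then 0 else Suc (Max (set (map height cs))))"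

fun prune :: "btree \<Rightarrow> btree" where
  "prune (Node ks cs) = Node ks (map prune (filter (\<lambda>c. \<not> is_leaf c) cs))"

datatype ires = Fit btree | Split btree nat btree

definition split_node :: "nat \<Rightarrow> nat list \<Rightarrow> btree list \<Rightarrow> ires" where
  "split_node m ks cs =
     (if length ks \<le> 2 * m then Fit (Node ks cs)
      else Split (Node (take m ks) (take (Suc m) cs)) (ks ! m)
                 (Node (drop (Suc m) ks) (drop (Suc m) cs)))"

text \<open>Insertion into a subtree; second component: the median key of the
  receiving leaf if that leaf splits.\<close>
function ins :: "nat \<Rightarrow> nat \<Rightarrow> btree \<Rightarrow> ires \<times> nat option" where
  "ins m x (Node ks cs) =
     (if cs = [] then
        (let ks' = insort x ks in
           (split_node m ks' [], if length ks' > 2 * m then Some (ks' ! m) else None))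
      else
        (let i = min (length (filter (\<lambda>k. k < x) ks)) (length cs - 1) in
           (case ins m x (cs ! i) of
              (Fit c, med) \<Rightarrow> (Fit (Node ks (cs[i := c])), med)
            | (Split l k r, med) \<Rightarrow>
                (split_node m (take i ks @ k # drop i ks)
                              (take i cs @ l # r # drop (Suc i) cs), med))))"
  by pat_completeness auto
termination
  apply (relation "measure (\<lambda>(m, x, t). size t)")
   apply simp
  apply (simp add: Let_def)
  by (metis diff_less length_greater_0_conv less_numeral_extra(1) min_less_iff_disj
      nth_mem size_list_estimation' order_refl less_Suc_eq_le)

definition insert_key :: "nat \<Rightarrow> nat \<Rightarrow> btree \<Rightarrow> btree \<times> nat option" where
  "insert_key m x t =
     (case ins m x t of
        (Fit t', med) \<Rightarrow> (t', med)
      | (Split l k r, med) \<Rightarrow> (Node [k] [l, r], med))"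

fun steps :: "nat \<Rightarrow> btree \<Rightarrow> nat list \<Rightarrow> (btree \<times> nat option) list" where
  "steps m t [] = []"
| "steps m t (x # xs) =
     (let (t', med) = insert_key m x t in (t', med) # steps m t' xs)"

definition final_tree :: "nat \<Rightarrow> nat list \<Rightarrow> btree" where
  "final_tree m p = foldl (\<lambda>t x. fst (insert_key m x t)) (Node [] []) p"

text \<open>History (T_1,...,T_n) up to isomorphism.\<close>
definition history :: "nat \<Rightarrow> nat list \<Rightarrow> shp list" where
  "history m p = map (shape \<circ> fst) (steps m (Node [] []) p)"

text \<open>Medians K_{i_1},...,K_{i_{n_1}} of the splitting leaves, in time order.\<close>
definition leaf_medians :: "nat \<Rightarrow> nat list \<Rightarrow> nat list" where
  "leaf_medians m p = List.map_filter snd (steps m (Node [] []) p)"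

text \<open>Standardisation: the order-isomorphic permutation of {1..length xs}.\<close>
definition std :: "nat list \<Rightarrow> nat list" where
  "std xs = map (\<lambda>x. card {y \<in> set xs. y \<le> x}) xs"

definition pi1 :: "nat \<Rightarrow> nat list \<Rightarrow> nat list" where
  "pi1 m p = std (leaf_medians m p)"

text \<open>A permutation in S_n, as the list (pi(1),...,pi(n)).\<close>
definition is_perm :: "nat \<Rightarrow> nat list \<Rightarrow> bool" where
  "is_perm n p \<longleftrightarrow> distinct p \<and> set p = {1..n}"

end

theory Submission imports Defs "HOL-Library.Sublist" begin

fun merge :: "nat list list \<Rightarrow> nat list \<Rightarrow> nat list" where
  "merge [] K = []"
| "merge (x # X) [] = x"
| "merge (x # X) (k # K) = x @ k # merge X K"

fun inorder :: "btree \<Rightarrow> nat list" where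
  "inorder (Node ks cs) = (if cs = [] then ks else merge (map inorder cs) ks)"

fun ikeys :: "btree \<Rightarrow> nat list" where
  "ikeys (Node ks cs) = (if cs = [] then [] else merge (map ikeys cs) ks)"

fun lsz :: "btree \<Rightarrow> nat list" where
  "lsz (Node ks cs) = (if cs = [] then [length ks] else concat (map lsz cs))"

fun slsz :: "shp \<Rightarrow> nat list" where
  "slsz (SNode n cs) = (if cs = [] then [n] else concat (map slsz cs))"

fun wf :: "nat \<Rightarrow> btree \<Rightarrow> bool" where
  "wf m (Node ks cs) = (if cs = [] then length ks \<le> 2*m
      else length cs = Suc (length ks) \<and> (\<forall>c\<in>set cs. wf m c))"

fun bal :: "nat \<Rightarrow> btree \<Rightarrow> bool" where
  "bal 0 (Node ks cs) = (cs = [])"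
| "bal (Suc h) (Node ks cs) = (cs \<noteq> [] \<and> (\<forall>c\<in>set cs. bal h c))"

lemma slsz_shape: "slsz (shape t) = lsz t"
  by (induction t) (auto cong: map_cong)

lemma merge_splice:
  "i < length X \<Longrightarrow> length X = Suc (length K) \<Longrightarrow>
   merge (take i X @ a # b # drop (Suc i) X) (take i K @ k # drop i K) = merge (X[i := a @ k # b]) K"
proof (induction i arbitrary: X K)
  case 0
  then obtain x X' where X: "X = x # X'" by (cases X) auto
  show ?case using 0 X by (cases K; cases X') auto
next
  case (Suc i)
  then obtain x X' where X: "X = x # X'" by (cases X) auto
  from Suc X obtain k' K' where K: "K = k' # K'" by (cases K) auto
  show ?case using Suc.IH[of X' K'] Suc.prems X K by simp
qed

lemma merge_decomp:
  "i < length X \<Longrightarrow> length X = Suc (length K) \<Longrightarrow>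
   \<exists>P Q. (\<forall>Y. merge (X[i:=Y]) K = P @ Y @ Q) \<and> length P = (\<Sum>x\<leftarrow>take i X. Suc (length x))"
proof (induction i arbitrary: X K)
  case 0
  then obtain x X' where X: "X = x # X'" by (cases X) auto
  show ?case
  proof (cases K)
    case Nil thus ?thesis using X by (intro exI[of _ "[]"] exI[of _ "[]"]) auto
  next
    case (Cons k K')
    thus ?thesis using X by (intro exI[of _ "[]"] exI[of _ "k # merge X' K'"]) auto
  qed
next
  case (Suc i)
  then obtain x X' where X: "X = x # X'" by (cases X) auto
  from Suc X obtain k' K' where K: "K = k' # K'" by (cases K) auto
  from Suc.IH[of X' K'] Suc.prems X K obtain P Q where
    "\<forall>Y. merge (X'[i:=Y]) K' = P @ Y @ Q" "length P = (\<Sum>x\<leftarrow>take i X'. Suc (length x))" by auto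
  thus ?case using X K by (intro exI[of _ "x @ k' # P"] exI[of _ Q]) auto
qed

lemma merge_split:
  "j < length K \<Longrightarrow> length X = Suc (length K) \<Longrightarrow>
   merge X K = merge (take (Suc j) X) (take j K) @ K!j # merge (drop (Suc j) X) (drop (Suc j) K)"
proof (induction j arbitrary: X K)
  case 0
  then obtain x X' where X: "X = x # X'" by (cases X) auto
  from 0 obtain k' K' where K: "K = k' # K'" by (cases K) auto
  show ?case using X K by simp
next
  case (Suc j)
  then obtain x X' where X: "X = x # X'" by (cases X) auto
  from Suc X obtain k' K' where K: "K = k' # K'" by (cases K) auto
  show ?case using Suc.IH[of K' X'] Suc.prems X K by simp
qed

lemma subseq_K: "length X = Suc (length K) \<Longrightarrow> subseq K (merge X K)"
proof (induction X K rule: merge.induct)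
  case (3 x X k K)
  have "subseq (k#K) (k # merge X K)" using 3 by simp
  thus ?case by (simp add: list_emb_append2)
qed auto

lemma subseq_X: "length X = Suc (length K) \<Longrightarrow> i < length X \<Longrightarrow> subseq (X!i) (merge X K)"
proof (induction X K arbitrary: i rule: merge.induct)
  case (3 x X k K) thus ?case
  proof (cases i)
    case 0
    have "subseq (x @ []) (x @ k # merge X K)" by (rule list_emb_append_mono) auto
    thus ?thesis using 0 by simp
  next
    case (Suc i')
    hence "subseq (X!i') (k # merge X K)" using 3 by (intro list_emb_Cons) auto
    thus ?thesis using Suc by (simp add: list_emb_append2)
  qed
qed auto

lemma subseq_merge_mono: "list_all2 subseq X Y \<Longrightarrow> subseq (merge X K) (merge Y K)"
proof (induction X K arbitrary: Y rule: merge.induct)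
  case (1 K) thus ?case by auto
next
  case (2 x X) thus ?case by (cases Y) auto
next
  case (3 x X k K) thus ?case by (cases Y) (auto intro: list_emb_append_mono)
qed

lemma sorted_subseq: "subseq xs ys \<Longrightarrow> sorted_wrt P ys \<Longrightarrow> sorted_wrt P xs"
  by (induction rule: list_emb.induct) (auto dest: list_emb_set)

lemma subseq_set: "subseq xs ys \<Longrightarrow> set xs \<subseteq> set ys"
  by (induction rule: list_emb.induct) auto

lemma set_merge_K: "length X = Suc (length K) \<Longrightarrow> set K \<subseteq> set (merge X K)"
  by (rule subseq_set, rule subseq_K)

lemma set_merge_X: "length X = Suc (length K) \<Longrightarrow> i < length X \<Longrightarrow> set (X!i) \<subseteq> set (merge X K)"
  by (rule subseq_set, rule subseq_X)

lemma merge_interval: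
  "sorted_wrt (<) (merge X K) \<Longrightarrow> length X = Suc (length K) \<Longrightarrow> i < length X \<Longrightarrow>
   y \<in> set (X!i) \<Longrightarrow> length (filter (\<lambda>k. k < y) K) = i"
proof (induction X K arbitrary: i rule: merge.induct)
  case (1 K) thus ?case by simp
next
  case (2 x X) thus ?case by simp
next
  case (3 x X k K)
  have s: "sorted_wrt (<) (x @ k # merge X K)" using 3 by simp
  have KK: "set K \<subseteq> set (merge X K)" using 3 by (intro set_merge_K) simp
  show ?case
  proof (cases i)
    case 0
    with 3 have "y \<in> set x" by simp
    with s have "y < k" by (auto simp: sorted_wrt_append)
    moreover have "\<forall>z\<in>set K. k < z" using s KK by (auto simp: sorted_wrt_append)
    ultimately have "filter (\<lambda>k. k < y) (k#K) = []" by (auto simp: filter_empty_conv)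
    thus ?thesis using 0 by simp
  next
    case (Suc i')
    with 3 have y: "y \<in> set (X!i')" "i' < length X" by auto
    hence "y \<in> set (merge X K)" using set_merge_X[of X K i'] 3 by auto
    with s have "k < y" by (auto simp: sorted_wrt_append)
    moreover have "length (filter (\<lambda>k. k < y) K) = i'"
      using 3 y s by (intro "3.IH") (auto simp: sorted_wrt_append)
    ultimately show ?thesis using Suc by simp
  qed
qed

lemma insort_app_lt: "\<forall>a\<in>set A. a < (y::nat) \<Longrightarrow> insort y (A @ B) = A @ insort y B"
  by (induction A) auto

lemma insort_app_ge: "B = [] \<or> (y::nat) \<le> hd B \<Longrightarrow> insort y (C @ B) = insort y C @ B"
  by (induction C) (cases B, auto)+

lemma merge_insort:
  "sorted_wrt (<) (merge X K) \<Longrightarrow> length X = Suc (length K) \<Longrightarrow> i = length (filter (\<lambda>k. k < y) K) \<Longrightarrow>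
   merge (X[i := insort y (X!i)]) K = insort y (merge X K)"
proof (induction X K arbitrary: i rule: merge.induct)
  case (1 K) thus ?case by simp
next
  case (2 x X) thus ?case by simp
next
  case (3 x X k K)
  have s: "sorted_wrt (<) (x @ k # merge X K)" using 3 by simp
  have KK: "set K \<subseteq> set (merge X K)" using 3 by (intro set_merge_K) simp
  show ?case
  proof (cases "k < y")
    case False
    have "\<forall>z\<in>set K. k < z" using s KK by (auto simp: sorted_wrt_append)
    hence "filter (\<lambda>k. k < y) (k#K) = []" using False by (auto simp: filter_empty_conv)
    hence "i = 0" using 3 by simp
    thus ?thesis using False by (simp add: insort_app_ge)
  next
    case True
    then obtain i' where i': "i = Suc i'" "i' = length (filter (\<lambda>k. k < y) K)" using 3 by simp
    have "\<forall>a\<in>set (x @ [k]). a < y" using s True by (auto simp: sorted_wrt_append)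
    hence "insort y (x @ k # merge X K) = x @ k # insort y (merge X K)"
      using insort_app_lt[of "x @ [k]" y] by simp
    moreover have "merge (X[i' := insort y (X!i')]) K = insort y (merge X K)"
      using 3 i' s by (intro "3.IH") (auto simp: sorted_wrt_append)
    ultimately show ?thesis using i' by simp
  qed
qed

fun io_r :: "ires \<Rightarrow> nat list" where
  "io_r (Fit t) = inorder t"
| "io_r (Split l k r) = inorder l @ k # inorder r"

fun ik_r :: "ires \<Rightarrow> nat list" where
  "ik_r (Fit t) = ikeys t"
| "ik_r (Split l k r) = ikeys l @ k # ikeys r"

fun lz_r :: "ires \<Rightarrow> nat list" where
  "lz_r (Fit t) = lsz t"
| "lz_r (Split l k r) = lsz l @ lsz r"

lemma ins_leaf: "ins m x (Node ks []) = (split_node m (insort x ks) [],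
   if length (insort x ks) > 2*m then Some (insort x ks ! m) else None)"
  by (simp add: Let_def)

lemma ins_node: "cs \<noteq> [] \<Longrightarrow> min (length (filter (\<lambda>k. k < x) ks)) (length cs - 1) = i \<Longrightarrow>
  ins m x (Node ks cs) = (case ins m x (cs!i) of
              (Fit c, med) \<Rightarrow> (Fit (Node ks (cs[i := c])), med)
            | (Split l k r, med) \<Rightarrow>
                (split_node m (take i ks @ k # drop i ks)
                              (take i cs @ l # r # drop (Suc i) cs), med))"
  by (simp add: Let_def)

declare ins.simps [simp del]

lemma sn_io_node: "CS \<noteq> [] \<Longrightarrow> length CS = Suc (length KS) \<Longrightarrow>
  io_r (split_node m KS CS) = merge (map inorder CS) KS"
proof (cases "length KS \<le> 2*m")
  case False
  assume a: "CS \<noteq> []" "length CS = Suc (length KS)"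
  hence "take (Suc m) CS \<noteq> []" "drop (Suc m) CS \<noteq> []" "m < length KS" using False by auto
  thus ?thesis using False a merge_split[of m KS "map inorder CS"]
    by (simp add: split_node_def take_map drop_map)
qed (simp add: split_node_def)

lemma sn_ik_node: "CS \<noteq> [] \<Longrightarrow> length CS = Suc (length KS) \<Longrightarrow>
  ik_r (split_node m KS CS) = merge (map ikeys CS) KS"
proof (cases "length KS \<le> 2*m")
  case False
  assume a: "CS \<noteq> []" "length CS = Suc (length KS)"
  hence "take (Suc m) CS \<noteq> []" "drop (Suc m) CS \<noteq> []" "m < length KS" using False by auto
  thus ?thesis using False a merge_split[of m KS "map ikeys CS"]
    by (simp add: split_node_def take_map drop_map)
qed (simp add: split_node_def)

lemma sn_lz_node: "CS \<noteq> [] \<Longrightarrow> length CS = Suc (length KS) \<Longrightarrow>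
  lz_r (split_node m KS CS) = concat (map lsz CS)"
proof (cases "length KS \<le> 2*m")
  case False
  assume a: "CS \<noteq> []" "length CS = Suc (length KS)"
  hence "take (Suc m) CS \<noteq> []" "drop (Suc m) CS \<noteq> []" "m < length KS" using False by auto
  thus ?thesis using False a
    by (simp add: split_node_def flip: concat_append map_append)
qed (simp add: split_node_def)

lemma sn_io_leaf: "io_r (split_node m KS []) = KS"
  by (auto simp: split_node_def intro: id_take_nth_drop[symmetric])

lemma node_i:
  assumes "wf m (Node ks cs)" "cs \<noteq> []"
  shows "min (length (filter (\<lambda>k. k < x) ks)) (length cs - 1) = length (filter (\<lambda>k. k < x) ks)"
    "length (filter (\<lambda>k. k < x) ks) < length cs"
proof -
  have "length (filter (\<lambda>k. k < x) ks) \<le> length ks" by (rule length_filter_le)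
  thus "min (length (filter (\<lambda>k. k < x) ks)) (length cs - 1) = length (filter (\<lambda>k. k < x) ks)"
    "length (filter (\<lambda>k. k < x) ks) < length cs"
    using assms by (auto simp: min_def less_Suc_eq_le)
qed

lemma node_len: "wf m (Node ks cs) \<Longrightarrow> cs \<noteq> [] \<Longrightarrow> length cs = Suc (length ks)"
  by simp

lemma ins_inorder:
  "wf m t \<Longrightarrow> sorted_wrt (<) (inorder t) \<Longrightarrow> io_r (fst (ins m x t)) = insort x (inorder t)"
proof (induction t arbitrary: x)
  case (Node ks cs)
  show ?case
  proof (cases "cs = []")
    case True thus ?thesis by (simp add: ins_leaf sn_io_leaf)
  next
    case False
    define i where "i = length (filter (\<lambda>k. k < x) ks)"
    have ni: "min (length (filter (\<lambda>k. k < x) ks)) (length cs - 1) = i" "i < length cs"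
      "length cs = Suc (length ks)"
      using node_i[of m ks cs x, OF Node.prems(1) False] node_len[OF Node.prems(1) False]
      by (simp_all add: i_def)
    have srt: "sorted_wrt (<) (merge (map inorder cs) ks)" using Node.prems False by simp
    have c_in: "cs!i \<in> set cs" using ni by simp
    have wfc: "wf m (cs!i)" using Node.prems False c_in by simp
    have sc: "sorted_wrt (<) (inorder (cs!i))"
      using subseq_X[of "map inorder cs" ks i] ni srt sorted_subseq by auto
    have IH: "io_r (fst (ins m x (cs!i))) = insort x (inorder (cs!i))" using Node.IH[OF c_in wfc sc] .
    have key: "merge ((map inorder cs)[i := insort x (inorder (cs!i))]) ks = insort x (merge (map inorder cs) ks)"
      using merge_insort[OF srt _ i_def] ni by simp
    obtain res med where rm: "ins m x (cs!i) = (res, med)" by force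
    note insn = ins_node[OF False ni(1)]
    show ?thesis
    proof (cases res)
      case (Fit c')
      thus ?thesis using rm False IH key by (simp add: insn map_update)
    next
      case (Split l k r)
      have CS: "take i cs @ l # r # drop (Suc i) cs \<noteq> []"
        "length (take i cs @ l # r # drop (Suc i) cs) = Suc (length (take i ks @ k # drop i ks))"
        using ni by auto
      have "merge (map inorder (take i cs @ l # r # drop (Suc i) cs)) (take i ks @ k # drop i ks)
           = merge ((map inorder cs)[i := inorder l @ k # inorder r]) ks"
        using merge_splice[of i "map inorder cs" ks] ni by (simp add: take_map drop_map)
      thus ?thesis using rm False IH key Split CS by (simp add: insn sn_io_node)
    qed
  qed
qed

lemma sn_wf: "CS \<noteq> [] \<Longrightarrow> length CS = Suc (length KS) \<Longrightarrow> \<forall>c\<in>set CS. wf m c \<Longrightarrow>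
  (case split_node m KS CS of Fit t \<Rightarrow> wf m t | Split l k r \<Rightarrow> wf m l \<and> wf m r)"
proof (cases "length KS \<le> 2*m")
  case False
  assume a: "CS \<noteq> []" "length CS = Suc (length KS)" "\<forall>c\<in>set CS. wf m c"
  hence "take (Suc m) CS \<noteq> []" "drop (Suc m) CS \<noteq> []" "m < length KS" using False by auto
  thus ?thesis using False a by (auto simp: split_node_def dest: in_set_takeD in_set_dropD)
qed (simp add: split_node_def)

lemma ins_wf: "wf m t \<Longrightarrow> (case fst (ins m x t) of Fit t' \<Rightarrow> wf m t' | Split l k r \<Rightarrow> wf m l \<and> wf m r)"
proof (induction t arbitrary: x)
  case (Node ks cs)
  show ?case
  proof (cases "cs = []")
    case True thus ?thesis using Node.prems by (auto simp: ins_leaf split_node_def)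
  next
    case False
    define i where "i = length (filter (\<lambda>k. k < x) ks)"
    have ni: "min (length (filter (\<lambda>k. k < x) ks)) (length cs - 1) = i" "i < length cs"
      "length cs = Suc (length ks)"
      using node_i[of m ks cs x, OF Node.prems(1) False] node_len[OF Node.prems(1) False]
      by (simp_all add: i_def)
    have c_in: "cs!i \<in> set cs" using ni by simp
    have wfc: "wf m (cs!i)" using Node.prems False c_in by simp
    have wfs: "\<forall>c\<in>set cs. wf m c" using Node.prems False by simp
    have IH: "case fst (ins m x (cs!i)) of Fit t' \<Rightarrow> wf m t' | Split l k r \<Rightarrow> wf m l \<and> wf m r"
      using Node.IH[OF c_in wfc] .
    obtain res med where rm: "ins m x (cs!i) = (res, med)" by force
    note insn = ins_node[OF False ni(1)]
    show ?thesis
    proof (cases res)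
      case (Fit c')
      thus ?thesis using rm False IH wfs ni by (auto simp: insn dest: set_update_subset_insert[THEN subsetD])
    next
      case (Split l k r)
      have CS: "take i cs @ l # r # drop (Suc i) cs \<noteq> []"
        "length (take i cs @ l # r # drop (Suc i) cs) = Suc (length (take i ks @ k # drop i ks))"
        "\<forall>c\<in>set (take i cs @ l # r # drop (Suc i) cs). wf m c"
        using ni IH rm Split wfs by (auto dest: in_set_takeD in_set_dropD)
      show ?thesis using sn_wf[OF CS] rm Split by (simp add: insn)
    qed
  qed
qed

lemma length_merge: "length X = Suc (length K) \<Longrightarrow> length (merge X K) = sum_list (map length X) + length K"
  by (induction X K rule: merge.induct) auto

lemma lsz_ikeys: "wf m t \<Longrightarrow> length (lsz t) = Suc (length (ikeys t))"
proof (induction t)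
  case (Node ks cs)
  show ?case
  proof (cases "cs = []")
    case False
    have "length (concat (map lsz cs)) = (\<Sum>c\<leftarrow>cs. Suc (length (ikeys c)))"
      using Node False by (simp add: length_concat comp_def cong: map_cong)
    also have "\<dots> = sum_list (map length (map ikeys cs)) + length cs"
      by (simp add: sum_list_Suc comp_def)
    finally show ?thesis using Node.prems False by (simp add: length_merge)
  qed simp
qed

lemma concat_upd: "i < length X \<Longrightarrow> concat (X[i:=Y]) = concat (take i X) @ Y @ concat (drop (Suc i) X)"
  by (simp add: upd_conv_take_nth_drop)

lemma concat_nth: "i < length X \<Longrightarrow> concat X = concat (take i X) @ X!i @ concat (drop (Suc i) X)"
  using concat_upd[of i X "X!i"] by simp

lemma ins_ik:
  "wf m t \<Longrightarrow>
   (snd (ins m x t) = None \<longrightarrow> (\<exists>t'. fst (ins m x t) = Fit t' \<and> ikeys t' = ikeys t \<and> length (lsz t') = length (lsz t))) \<and>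
   (\<forall>k. snd (ins m x t) = Some k \<longrightarrow> (\<exists>j \<le> length (ikeys t).
        ik_r (fst (ins m x t)) = take j (ikeys t) @ k # drop j (ikeys t) \<and>
        j < length (lsz t) \<and> lsz t ! j = 2*m \<and>
        lz_r (fst (ins m x t)) = take j (lsz t) @ m # m # drop (Suc j) (lsz t)))"
proof (induction t arbitrary: x)
  case (Node ks cs)
  show ?case
  proof (cases "cs = []")
    case True
    show ?thesis using True Node.prems by (auto simp: ins_leaf split_node_def intro!: exI[of _ 0])
  next
    case False
    define i where "i = length (filter (\<lambda>k. k < x) ks)"
    have ni: "min (length (filter (\<lambda>k. k < x) ks)) (length cs - 1) = i" "i < length cs"
      "length cs = Suc (length ks)"
      using node_i[of m ks cs x, OF Node.prems(1) False] node_len[OF Node.prems(1) False]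
      by (simp_all add: i_def)
    have c_in: "cs!i \<in> set cs" using ni by simp
    have wfs: "\<forall>c\<in>set cs. wf m c" using Node.prems False by simp
    have wfc: "wf m (cs!i)" using wfs c_in by simp
    note IH = Node.IH[OF c_in wfc, of x]
    obtain res med where rm: "ins m x (cs!i) = (res, med)" by force
    note insn = ins_node[OF False ni(1)]
    have med: "snd (ins m x (Node ks cs)) = med" using rm by (cases res) (simp_all add: insn)
    have ikr: "ik_r (fst (ins m x (Node ks cs))) = merge ((map ikeys cs)[i := ik_r res]) ks"
    proof (cases res)
      case (Fit c')
      thus ?thesis using rm False by (simp add: insn map_update)
    next
      case (Split l k r)
      have CS: "take i cs @ l # r # drop (Suc i) cs \<noteq> []"
        "length (take i cs @ l # r # drop (Suc i) cs) = Suc (length (take i ks @ k # drop i ks))"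
        using ni by auto
      have "merge (map ikeys (take i cs @ l # r # drop (Suc i) cs)) (take i ks @ k # drop i ks)
           = merge ((map ikeys cs)[i := ikeys l @ k # ikeys r]) ks"
        using merge_splice[of i "map ikeys cs" ks] ni by (simp add: take_map drop_map)
      thus ?thesis using rm Split CS by (simp add: insn sn_ik_node)
    qed
    have lzr: "lz_r (fst (ins m x (Node ks cs))) = concat ((map lsz cs)[i := lz_r res])"
    proof (cases res)
      case (Fit c')
      thus ?thesis using rm False by (simp add: insn map_update)
    next
      case (Split l k r)
      have CS: "take i cs @ l # r # drop (Suc i) cs \<noteq> []"
        "length (take i cs @ l # r # drop (Suc i) cs) = Suc (length (take i ks @ k # drop i ks))"
        using ni by auto
      thus ?thesis using rm Split ni by (simp add: insn sn_lz_node concat_upd take_map drop_map)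
    qed
    have ikt: "ikeys (Node ks cs) = merge (map ikeys cs) ks" using False by simp
    have lzt: "lsz (Node ks cs) = concat (map lsz cs)" using False by simp
    show ?thesis
    proof (intro conjI allI impI)
      assume "snd (ins m x (Node ks cs)) = None"
      hence mN: "med = None" using med by simp
      then obtain c' where c': "res = Fit c'" "ikeys c' = ikeys (cs!i)" "length (lsz c') = length (lsz (cs!i))"
        using IH rm by auto
      have "fst (ins m x (Node ks cs)) = Fit (Node ks (cs[i:=c']))" using rm c' by (simp add: insn)
      moreover have "map ikeys (cs[i:=c']) = map ikeys cs"
        using c' ni by (metis list_update_id map_update nth_map)
      hence "ikeys (Node ks (cs[i:=c'])) = ikeys (Node ks cs)" using False by simp
      moreover have "length (lsz (Node ks (cs[i:=c']))) = length (lsz (Node ks cs))"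
        using c' ni False concat_nth[of i "map lsz cs"] by (simp add: map_update concat_upd)
      ultimately show "\<exists>t'. fst (ins m x (Node ks cs)) = Fit t' \<and> ikeys t' = ikeys (Node ks cs) \<and>
          length (lsz t') = length (lsz (Node ks cs))" by blast
    next
      fix k assume "snd (ins m x (Node ks cs)) = Some k"
      hence "med = Some k" using med by simp
      then obtain jc where jc: "jc \<le> length (ikeys (cs!i))"
        "ik_r res = take jc (ikeys (cs!i)) @ k # drop jc (ikeys (cs!i))"
        "jc < length (lsz (cs!i))" "lsz (cs!i) ! jc = 2*m"
        "lz_r res = take jc (lsz (cs!i)) @ m # m # drop (Suc jc) (lsz (cs!i))"
        using IH rm by auto
      obtain P Q where PQ: "\<forall>Y. merge ((map ikeys cs)[i:=Y]) ks = P @ Y @ Q"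
        "length P = (\<Sum>x\<leftarrow>take i (map ikeys cs). Suc (length x))"
        using merge_decomp[of i "map ikeys cs" ks] ni by auto
      have "(map ikeys cs)[i := ikeys (cs!i)] = map ikeys cs"
        using ni by (metis list_update_id nth_map)
      hence ik0: "ikeys (Node ks cs) = P @ ikeys (cs!i) @ Q"
        using PQ(1)[rule_format, of "ikeys (cs!i)"] ikt by simp
      define A where "A = concat (take i (map lsz cs))"
      define B where "B = concat (drop (Suc i) (map lsz cs))"
      have lz0: "lsz (Node ks cs) = A @ lsz (cs!i) @ B"
        using concat_nth[of i "map lsz cs"] ni lzt by (simp add: A_def B_def)
      have "length A = (\<Sum>c\<leftarrow>take i cs. length (lsz c))"
        by (simp add: A_def length_concat take_map comp_def)
      also have "\<dots> = (\<Sum>c\<leftarrow>take i cs. Suc (length (ikeys c)))"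
        using wfs by (intro arg_cong[where f=sum_list] map_cong refl lsz_ikeys) (auto dest: in_set_takeD)
      also have "\<dots> = length P" using PQ(2) by (simp add: take_map comp_def)
      finally have lA: "length A = length P" .
      define j where "j = length P + jc"
      show "\<exists>j \<le> length (ikeys (Node ks cs)).
        ik_r (fst (ins m x (Node ks cs))) = take j (ikeys (Node ks cs)) @ k # drop j (ikeys (Node ks cs)) \<and>
        j < length (lsz (Node ks cs)) \<and> lsz (Node ks cs) ! j = 2*m \<and>
        lz_r (fst (ins m x (Node ks cs))) = take j (lsz (Node ks cs)) @ m # m # drop (Suc j) (lsz (Node ks cs))"
      proof (intro exI[of _ j] conjI)
        show "j \<le> length (ikeys (Node ks cs))" using ik0 jc by (simp add: j_def)
        show "ik_r (fst (ins m x (Node ks cs))) = take j (ikeys (Node ks cs)) @ k # drop j (ikeys (Node ks cs))"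
          using ikr PQ(1) ik0 jc by (simp add: j_def)
        show "j < length (lsz (Node ks cs))" using lz0 lA jc by (simp add: j_def)
        show "lsz (Node ks cs) ! j = 2*m" using lz0 lA jc by (simp add: j_def nth_append)
        show "lz_r (fst (ins m x (Node ks cs))) = take j (lsz (Node ks cs)) @ m # m # drop (Suc j) (lsz (Node ks cs))"
          using lzr lz0 lA jc ni by (simp add: j_def concat_upd A_def B_def Suc_le_eq)
      qed
    qed
  qed
qed

lemma top_facts: "ikeys (fst (insert_key m x t)) = ik_r (fst (ins m x t)) \<and>
  lsz (fst (insert_key m x t)) = lz_r (fst (ins m x t)) \<and>
  inorder (fst (insert_key m x t)) = io_r (fst (ins m x t)) \<and>
  snd (insert_key m x t) = snd (ins m x t)"
proof (cases "ins m x t")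
  case (Pair r med) thus ?thesis by (cases r) (simp_all add: insert_key_def)
qed

lemmas ik_top = top_facts[THEN conjunct1] and lz_top = top_facts[THEN conjunct2, THEN conjunct1]
  and io_top = top_facts[THEN conjunct2, THEN conjunct2, THEN conjunct1]
  and snd_top = top_facts[THEN conjunct2, THEN conjunct2, THEN conjunct2]

lemma wf_top: "wf m t \<Longrightarrow> wf m (fst (insert_key m x t))"
proof (cases "ins m x t")
  case (Pair r med)
  assume "wf m t"
  thus ?thesis using ins_wf[of m t x] Pair by (cases r) (simp_all add: insert_key_def)
qed

lemma step_inv:
  assumes "wf m t" "sorted_wrt (<) (inorder t)" "x \<notin> set (inorder t)"
  shows "wf m (fst (insert_key m x t))" "inorder (fst (insert_key m x t)) = insort x (inorder t)"
    "sorted_wrt (<) (inorder (fst (insert_key m x t)))"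
proof -
  show "wf m (fst (insert_key m x t))" using wf_top assms by blast
  show io: "inorder (fst (insert_key m x t)) = insort x (inorder t)"
    using io_top ins_inorder assms by metis
  show "sorted_wrt (<) (inorder (fst (insert_key m x t)))"
    unfolding io using assms by (simp add: strict_sorted_iff sorted_insort distinct_insort)
qed

lemma step_ik:
  assumes "wf m t"
  shows "snd (insert_key m x t) = None \<Longrightarrow> ikeys (fst (insert_key m x t)) = ikeys t \<and>
           length (lsz (fst (insert_key m x t))) = length (lsz t)"
    "snd (insert_key m x t) = Some k \<Longrightarrow> (\<exists>j \<le> length (ikeys t).
        ikeys (fst (insert_key m x t)) = take j (ikeys t) @ k # drop j (ikeys t) \<and>
        j < length (lsz t) \<and> lsz t ! j = 2*m \<and>
        lsz (fst (insert_key m x t)) = take j (lsz t) @ m # m # drop (Suc j) (lsz t))"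
  using ins_ik[OF assms, of x] unfolding ik_top lz_top snd_top by auto

lemma ikeys_subseq: "subseq (ikeys t) (inorder t)"
proof (induction t)
  case (Node ks cs)
  have "list_all2 subseq (map ikeys cs) (map inorder cs)"
    using Node by (auto simp: list_all2_conv_all_nth)
  thus ?case by (simp add: subseq_merge_mono)
qed

definition oiso :: "nat list \<Rightarrow> nat list \<Rightarrow> bool" where
  "oiso X Y \<longleftrightarrow> (\<exists>f. (\<forall>a\<in>set X. \<forall>b\<in>set X. a < b \<longrightarrow> f a < f b) \<and> map f X = Y)"

lemma oiso_sorted: "sorted_wrt (<) X \<Longrightarrow> sorted_wrt (<) Y \<Longrightarrow> length X = length Y \<Longrightarrow> oiso X Y"
proof (induction X Y rule: list_induct2')
  case 1 show ?case unfolding oiso_def by (intro exI[of _ id]) simp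
next
  case (4 a X b Y)
  have "oiso X Y" using "4.prems" by (intro "4.IH") auto
  then obtain g where g: "\<forall>u\<in>set X. \<forall>v\<in>set X. u < v \<longrightarrow> g u < g v" "map g X = Y"
    unfolding oiso_def by blast
  have aX: "\<forall>v\<in>set X. a < v" "\<forall>v\<in>set Y. b < v" using "4.prems" by auto
  define f where "f = (\<lambda>z. if z = a then b else g z)"
  have "map f X = map g X" using aX by (auto simp: f_def)
  hence mf: "map f (a # X) = b # Y" using g by (simp add: f_def)
  have mono: "\<forall>u\<in>set (a#X). \<forall>v\<in>set (a#X). u < v \<longrightarrow> f u < f v"
  proof (intro ballI impI)
    fix u v assume uv: "u \<in> set (a#X)" "v \<in> set (a#X)" "u < v"
    show "f u < f v"
    proof (cases "u = a")
      case True
      hence v: "v \<in> set X" "v \<noteq> a" using uv by auto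
      hence "g v \<in> set Y" using g(2) by auto
      thus ?thesis using True aX v by (simp add: f_def)
    next
      case False
      hence u: "u \<in> set X" using uv by simp
      hence "v \<noteq> a" using aX uv by auto
      hence v: "v \<in> set X" using uv by simp
      have "g u < g v" using g(1) u v uv(3) by blast
      thus ?thesis using False \<open>v \<noteq> a\<close> by (simp add: f_def)
    qed
  qed
  show ?case unfolding oiso_def by (intro exI[of _ f] conjI mono mf)
qed simp_all

lemma oiso_step:
  assumes "oiso (take j S @ k # drop j S @ R) (take j S' @ k' # drop j S' @ R')" "length S = length S'"
  shows "oiso (S @ k # R) (S' @ k' # R')"
proof -
  obtain f where f: "\<forall>a\<in>set (take j S @ k # drop j S @ R). \<forall>b\<in>set (take j S @ k # drop j S @ R). a < b \<longrightarrow> f a < f b"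
    "map f (take j S @ k # drop j S @ R) = take j S' @ k' # drop j S' @ R'"
    using assms(1) unfolding oiso_def by blast
  have "set S = set (take j S) \<union> set (drop j S)" by (metis append_take_drop_id set_append)
  hence st: "set (take j S @ k # drop j S @ R) = set (S @ k # R)" by auto
  have l1: "length (map f (take j S)) = length (take j S')" using assms(2) by simp
  from f(2) l1 have e1: "map f (take j S) = take j S'" "f k = k'"
    "map f (drop j S @ R) = drop j S' @ R'"
    by (simp_all add: append_eq_append_conv)
  have l2: "length (map f (drop j S)) = length (drop j S')" using assms(2) by simp
  from e1(3) l2 have e2: "map f (drop j S) = drop j S'" "map f R = R'"
    by (simp_all add: append_eq_append_conv)
  have "map f S = S'"
    by (metis append_take_drop_id e1(1) e2(1) map_append)
  hence "map f (S @ k # R) = S' @ k' # R'" using e1 e2 by simp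
  thus ?thesis using f(1) st unfolding oiso_def by metis
qed

lemma oiso_std: "oiso X Y \<Longrightarrow> std X = std Y"
proof -
  assume "oiso X Y"
  then obtain f where f: "\<forall>a\<in>set X. \<forall>b\<in>set X. a < b \<longrightarrow> f a < f b" "map f X = Y"
    unfolding oiso_def by blast
  have inj: "inj_on f (set X)"
    by (rule inj_onI) (metis f(1) less_irrefl linorder_neqE_nat)
  have eq: "{y \<in> f ` set X. y \<le> f x} = f ` {y \<in> set X. y \<le> x}" if x: "x \<in> set X" for x
  proof
    show "{y \<in> f ` set X. y \<le> f x} \<subseteq> f ` {y \<in> set X. y \<le> x}"
    proof
      fix z assume "z \<in> {y \<in> f ` set X. y \<le> f x}"
      then obtain y where y: "y \<in> set X" "z = f y" "f y \<le> f x" by auto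
      have "y \<le> x" using f(1) x y by (metis leD linorder_le_less_linear)
      thus "z \<in> f ` {y \<in> set X. y \<le> x}" using y by auto
    qed
    show "f ` {y \<in> set X. y \<le> x} \<subseteq> {y \<in> f ` set X. y \<le> f x}"
      using f(1) x by (auto simp: le_less)
  qed
  have "std Y = map (\<lambda>x. card {y \<in> f ` set X. y \<le> f x}) X"
    unfolding std_def f(2)[symmetric] by (simp add: comp_def)
  also have "\<dots> = std X" unfolding std_def
    by (intro map_cong refl) (simp add: eq card_image inj_on_subset[OF inj])
  finally show ?thesis by simp
qed

lemma uniq_j:
  assumes "(1::nat) \<le> m" "j < length L" "j' < length L" "L!j = 2*m" "L!j' = 2*m"
    "take j L @ m # m # drop (Suc j) L = take j' L @ m # m # drop (Suc j') L"
  shows "j = j'"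
proof (rule ccontr)
  assume "j \<noteq> j'"
  hence "j < j' \<or> j' < j" by arith
  thus False
  proof
    assume jj: "j < j'"
    have "(take j L @ m # m # drop (Suc j) L) ! j = m" using assms(2) by (simp add: nth_append)
    moreover have "(take j' L @ m # m # drop (Suc j') L) ! j = 2*m" using jj assms(2-5) by (simp add: nth_append)
    ultimately have "m = 2*m" using assms(6) by metis
    thus False using assms(1) by simp
  next
    assume jj: "j' < j"
    have "(take j' L @ m # m # drop (Suc j') L) ! j' = m" using assms(3) by (simp add: nth_append)
    moreover have "(take j L @ m # m # drop (Suc j) L) ! j' = 2*m" using jj assms(2-5) by (simp add: nth_append)
    ultimately have "m = 2*m" using assms(6) by metis
    thus False using assms(1) by simp
  qed
qed

lemma steps_Cons': "steps m t (x#xs) = insert_key m x t # steps m (fst (insert_key m x t)) xs"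
  by (simp add: split_beta)

declare steps.simps(2)[simp del]

lemma claim1_gen:
  "wf m t \<Longrightarrow> wf m u \<Longrightarrow> sorted_wrt (<) (inorder t) \<Longrightarrow> sorted_wrt (<) (inorder u) \<Longrightarrow> lsz t = lsz u \<Longrightarrow>
   distinct xs \<Longrightarrow> distinct ys \<Longrightarrow> set xs \<inter> set (inorder t) = {} \<Longrightarrow> set ys \<inter> set (inorder u) = {} \<Longrightarrow>
   map (shape \<circ> fst) (steps m t xs) = map (shape \<circ> fst) (steps m u ys) \<Longrightarrow> 1 \<le> m \<Longrightarrow>
   oiso (ikeys t @ List.map_filter snd (steps m t xs)) (ikeys u @ List.map_filter snd (steps m u ys))"
proof (induction xs arbitrary: t u ys)
  case Nil
  hence ys: "ys = []" by (cases ys) (simp_all add: steps_Cons')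
  have "sorted_wrt (<) (ikeys t)" "sorted_wrt (<) (ikeys u)"
    using Nil.prems ikeys_subseq sorted_subseq by blast+
  moreover have "length (ikeys t) = length (ikeys u)"
    using lsz_ikeys[of m t] lsz_ikeys[of m u] Nil.prems by simp
  ultimately show ?case using ys by (simp add: map_filter_simps oiso_sorted)
next
  case (Cons x xs)
  obtain y ys' where ys: "ys = y # ys'" using Cons.prems(10) by (cases ys) (auto simp: steps_Cons')
  define t1 where "t1 = fst (insert_key m x t)"
  define u1 where "u1 = fst (insert_key m y u)"
  have xt: "x \<notin> set (inorder t)" using Cons.prems by auto
  have yu: "y \<notin> set (inorder u)" using Cons.prems ys by auto
  note it = step_inv[OF Cons.prems(1,3) xt, folded t1_def]
  note iu = step_inv[OF Cons.prems(2,4) yu, folded u1_def]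
  have hist: "shape t1 = shape u1" "map (shape \<circ> fst) (steps m t1 xs) = map (shape \<circ> fst) (steps m u1 ys')"
    using Cons.prems(10) ys by (simp_all add: steps_Cons' t1_def u1_def comp_def)
  have L1: "lsz t1 = lsz u1" using hist(1) slsz_shape by metis
  have IH: "oiso (ikeys t1 @ List.map_filter snd (steps m t1 xs)) (ikeys u1 @ List.map_filter snd (steps m u1 ys'))"
    apply (rule Cons.IH)
    using it iu L1 hist Cons.prems ys by (auto simp: set_insort_key comp_def)
  have lenS: "length (ikeys t) = length (ikeys u)"
    using lsz_ikeys[of m t] lsz_ikeys[of m u] Cons.prems by simp
  have LL: "lsz t = lsz u" using Cons.prems by simp
  have mf: "List.map_filter snd (steps m t (x#xs)) = (case snd (insert_key m x t) of None \<Rightarrow> [] | Some k \<Rightarrow> [k]) @ List.map_filter snd (steps m t1 xs)"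
    "List.map_filter snd (steps m u ys) = (case snd (insert_key m y u) of None \<Rightarrow> [] | Some k \<Rightarrow> [k]) @ List.map_filter snd (steps m u1 ys')"
    by (simp_all add: steps_Cons' map_filter_simps t1_def u1_def ys split: option.split)
  show ?case
  proof (cases "snd (insert_key m x t)")
    case None
    note A = step_ik(1)[OF Cons.prems(1) None, folded t1_def]
    show ?thesis
    proof (cases "snd (insert_key m y u)")
      case None
      note B = step_ik(1)[OF Cons.prems(2) None, folded u1_def]
      show ?thesis using IH A B mf by (simp add: \<open>snd (insert_key m x t) = None\<close> None)
    next
      case (Some k')
      obtain j where "j < length (lsz u)" "lsz u1 = take j (lsz u) @ m # m # drop (Suc j) (lsz u)"
        using step_ik(2)[OF Cons.prems(2) Some, folded u1_def] by blast
      hence "length (lsz u1) = Suc (length (lsz u))" by simp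
      thus ?thesis using A L1 LL by simp
    qed
  next
    case (Some k)
    obtain j where A: "j < length (lsz t)" "lsz t ! j = 2*m" "lsz t1 = take j (lsz t) @ m # m # drop (Suc j) (lsz t)"
      "ikeys t1 = take j (ikeys t) @ k # drop j (ikeys t)"
      using step_ik(2)[OF Cons.prems(1) Some, folded t1_def] by blast
    show ?thesis
    proof (cases "snd (insert_key m y u)")
      case None
      note B = step_ik(1)[OF Cons.prems(2) None, folded u1_def]
      have "length (lsz t1) = Suc (length (lsz t))" using A by simp
      thus ?thesis using B L1 LL by simp
    next
      case (Some k')
      obtain j' where B: "j' < length (lsz u)" "lsz u ! j' = 2*m" "lsz u1 = take j' (lsz u) @ m # m # drop (Suc j') (lsz u)"
        "ikeys u1 = take j' (ikeys u) @ k' # drop j' (ikeys u)"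
        using step_ik(2)[OF Cons.prems(2) Some, folded u1_def] by blast
      have "j = j'" using uniq_j[of m j "lsz t" j'] A B L1 LL Cons.prems(11) by simp
      hence "oiso (take j (ikeys t) @ k # drop j (ikeys t) @ List.map_filter snd (steps m t1 xs))
                  (take j (ikeys u) @ k' # drop j (ikeys u) @ List.map_filter snd (steps m u1 ys'))"
        using IH A B by simp
      hence "oiso (ikeys t @ k # List.map_filter snd (steps m t1 xs)) (ikeys u @ k' # List.map_filter snd (steps m u1 ys'))"
        using lenS by (rule oiso_step)
      thus ?thesis using mf \<open>snd (insert_key m x t) = Some k\<close> Some by simp
    qed
  qed
qed

fun mapk :: "(nat \<Rightarrow> nat) \<Rightarrow> btree \<Rightarrow> btree" where
  "mapk f (Node ks cs) = Node (map f ks) (map (mapk f) cs)"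

fun kset :: "btree \<Rightarrow> nat set" where
  "kset (Node ks cs) = set ks \<union> \<Union> (kset ` set cs)"

fun mr :: "(nat \<Rightarrow> nat) \<Rightarrow> ires \<Rightarrow> ires" where
  "mr f (Fit t) = Fit (mapk f t)"
| "mr f (Split l k r) = Split (mapk f l) (f k) (mapk f r)"

fun kset_r :: "ires \<Rightarrow> nat set" where
  "kset_r (Fit t) = kset t"
| "kset_r (Split l k r) = kset l \<union> {k} \<union> kset r"

definition smo :: "nat set \<Rightarrow> (nat \<Rightarrow> nat) \<Rightarrow> bool" where
  "smo A f \<longleftrightarrow> (\<forall>a\<in>A. \<forall>b\<in>A. a < b \<longrightarrow> f a < f b)"

lemma smo_subset: "smo A f \<Longrightarrow> B \<subseteq> A \<Longrightarrow> smo B f"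
  unfolding smo_def by blast

lemma smo_le: "smo A f \<Longrightarrow> a \<in> A \<Longrightarrow> b \<in> A \<Longrightarrow> (f a \<le> f b) = (a \<le> b)"
  unfolding smo_def by (metis leD le_less linorder_le_less_linear)

lemma smo_less: "smo A f \<Longrightarrow> a \<in> A \<Longrightarrow> b \<in> A \<Longrightarrow> (f a < f b) = (a < b)"
  unfolding smo_def by (metis leD le_less linorder_le_less_linear)

lemma shape_mapk: "shape (mapk f t) = shape t"
  by (induction t) (auto cong: map_cong)

lemma insort_map: "smo (insert x (set ks)) f \<Longrightarrow> insort (f x) (map f ks) = map f (insort x ks)"
proof (induction ks)
  case (Cons a ks)
  have "(f x \<le> f a) = (x \<le> a)" using smo_le[OF Cons.prems] by simp
  moreover have "smo (insert x (set ks)) f" using Cons.prems by (rule smo_subset) auto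
  ultimately show ?case using Cons.IH by simp
qed simp

lemma sn_map: "split_node m (map f KS) (map (mapk f) CS) = mr f (split_node m KS CS)"
  by (simp add: split_node_def take_map drop_map)

lemma kset_sn: "kset_r (split_node m KS CS) \<subseteq> set KS \<union> \<Union> (kset ` set CS)"
  by (auto simp: split_node_def dest: in_set_takeD in_set_dropD)



lemma ins_kset: "kset_r (fst (ins m x t)) \<subseteq> insert x (kset t)"
proof (induction t arbitrary: x)
  case (Node ks cs)
  show ?case
  proof (cases "cs = []")
    case True
    thus ?thesis using kset_sn[of m "insort x ks" "[]"] by (simp add: ins_leaf set_insort_key)
  next
    case False
    define i where "i = min (length (filter (\<lambda>k. k < x) ks)) (length cs - 1)"
    have ilt: "i < length cs" using False by (simp add: i_def min_less_iff_disj)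
    have c_in: "cs!i \<in> set cs" using ilt by simp
    note IH = Node.IH[OF c_in, of x]
    obtain res med where rm: "ins m x (cs!i) = (res, med)" by force
    note insn = ins_node[OF False i_def[symmetric]]
    show ?thesis
    proof (cases res)
      case (Fit c')
      have "set (cs[i:=c']) \<subseteq> insert c' (set cs)" by (rule set_update_subset_insert)
      thus ?thesis using rm Fit IH c_in by (auto simp: insn)
    next
      case (Split l k r)
      have S1: "kset_r (split_node m (take i ks @ k # drop i ks) (take i cs @ l # r # drop (Suc i) cs))
          \<subseteq> set (take i ks @ k # drop i ks) \<union> \<Union> (kset ` set (take i cs @ l # r # drop (Suc i) cs))"
        by (rule kset_sn)
      have S2: "set (take i ks @ k # drop i ks) \<subseteq> insert k (set ks)"
        by (auto dest: in_set_takeD in_set_dropD)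
      have S3: "\<Union> (kset ` set (take i cs @ l # r # drop (Suc i) cs)) \<subseteq> kset l \<union> kset r \<union> \<Union> (kset ` set cs)"
        by (auto dest: in_set_takeD in_set_dropD)
      have S4: "insert k (kset l \<union> kset r) \<subseteq> insert x (kset (cs!i))" using IH rm Split by auto
      have S5: "kset (cs!i) \<subseteq> \<Union> (kset ` set cs)" using c_in by auto
      have S6: "insert k (set ks) \<union> (kset l \<union> kset r \<union> \<Union> (kset ` set cs)) \<subseteq> insert x (set ks \<union> \<Union> (kset ` set cs))"
        using S4 S5 by auto
      have E: "fst (ins m x (Node ks cs)) = split_node m (take i ks @ k # drop i ks) (take i cs @ l # r # drop (Suc i) cs)"
        using rm Split by (simp add: insn)
      have "kset_r (fst (ins m x (Node ks cs))) \<subseteq> insert k (set ks) \<union> (kset l \<union> kset r \<union> \<Union> (kset ` set cs))"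
        unfolding E using S1 S2 S3 by blast
      thus ?thesis using S6 unfolding kset.simps by (rule order_trans)
    qed
  qed
qed

lemma ins_map: "smo (insert x (kset t)) f \<Longrightarrow>
  ins m (f x) (mapk f t) = (mr f (fst (ins m x t)), map_option f (snd (ins m x t)))"
proof (induction t arbitrary: x)
  case (Node ks cs)
  show ?case
  proof (cases "cs = []")
    case True
    have sm: "smo (insert x (set ks)) f" using Node.prems True by simp
    have "m < length (insort x ks) \<Longrightarrow> map f (insort x ks) ! m = f (insort x ks ! m)" by simp
    thus ?thesis using True insort_map[OF sm] sn_map[of m f "insort x ks" "[]"]
      by (auto simp: ins_leaf)
  next
    case False
    define i where "i = min (length (filter (\<lambda>k. k < x) ks)) (length cs - 1)"
    have ilt: "i < length cs" using False by (simp add: i_def min_less_iff_disj)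
    have c_in: "cs!i \<in> set cs" using ilt by simp
    have "filter (\<lambda>k. k < f x) (map f ks) = map f (filter (\<lambda>k. k < x) ks)"
    proof -
      have "filter (\<lambda>k. k < f x) (map f ks) = map f (filter ((\<lambda>k. k < f x) \<circ> f) ks)" by (rule filter_map)
      also have "filter ((\<lambda>k. k < f x) \<circ> f) ks = filter (\<lambda>k. k < x) ks"
      proof (rule filter_cong[OF refl])
        fix k assume "k \<in> set ks"
        thus "((\<lambda>k. k < f x) \<circ> f) k = (k < x)" using smo_less[OF Node.prems, of k x] by simp
      qed
      finally show ?thesis .
    qed
    hence i2: "min (length (filter (\<lambda>k. k < f x) (map f ks))) (length (map (mapk f) cs) - 1) = i"
      by (simp add: i_def)
    have sm: "smo (insert x (kset (cs!i))) f" by (rule smo_subset[OF Node.prems]) (use c_in in auto)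
    note IH = Node.IH[OF c_in sm]
    obtain res med where rm: "ins m x (cs!i) = (res, med)" by force
    note insn = ins_node[OF False i_def[symmetric]]
    have F: "map (mapk f) cs \<noteq> []" using False by simp
    note insn2 = ins_node[OF F i2, of m]
    have ci: "map (mapk f) cs ! i = mapk f (cs!i)" using ilt by simp
    show ?thesis
    proof (cases res)
      case (Fit c')
      thus ?thesis using rm IH by (simp add: insn insn2 ci map_update)
    next
      case (Split l k r)
      have "split_node m (take i (map f ks) @ f k # drop i (map f ks))
             (take i (map (mapk f) cs) @ mapk f l # mapk f r # drop (Suc i) (map (mapk f) cs))
          = mr f (split_node m (take i ks @ k # drop i ks) (take i cs @ l # r # drop (Suc i) cs))"
        using sn_map[of m f "take i ks @ k # drop i ks" "take i cs @ l # r # drop (Suc i) cs"]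
        by (simp add: take_map drop_map)
      thus ?thesis using rm IH Split by (simp add: insn insn2 ci)
    qed
  qed
qed

lemma kset_top: "kset (fst (insert_key m x t)) \<subseteq> insert x (kset t)"
proof (cases "ins m x t")
  case (Pair r med) thus ?thesis using ins_kset[of m x t] by (cases r) (auto simp: insert_key_def)
qed

lemma insert_key_map: "smo (insert x (kset t)) f \<Longrightarrow>
  fst (insert_key m (f x) (mapk f t)) = mapk f (fst (insert_key m x t))"
proof (cases "ins m x t")
  case (Pair r med)
  assume "smo (insert x (kset t)) f"
  thus ?thesis using ins_map[of x t f m] Pair by (cases r) (auto simp: insert_key_def)
qed

lemma foldl_map: "smo (set xs \<union> kset t) f \<Longrightarrow>
  foldl (\<lambda>t x. fst (insert_key m x t)) (mapk f t) (map f xs) = mapk f (foldl (\<lambda>t x. fst (insert_key m x t)) t xs)"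
proof (induction xs arbitrary: t)
  case (Cons x xs)
  have "smo (insert x (kset t)) f" using Cons.prems by (rule smo_subset) auto
  hence e: "fst (insert_key m (f x) (mapk f t)) = mapk f (fst (insert_key m x t))" by (rule insert_key_map)
  have "smo (set xs \<union> kset (fst (insert_key m x t))) f"
    by (rule smo_subset[OF Cons.prems]) (use kset_top[of m x t] in auto)
  thus ?case using Cons.IH e by simp
qed simp

definition PP :: "btree \<Rightarrow> btree" where "PP t = (if is_leaf t then Node [] [] else prune t)"

fun pr_r :: "ires \<Rightarrow> ires" where
  "pr_r (Fit t) = Fit (prune t)"
| "pr_r (Split l k r) = Split (prune l) k (prune r)"

lemma bal_leaf: "bal 0 t \<Longrightarrow> is_leaf t"
  by (cases t) simp

lemma bal_nonleaf: "bal (Suc h) t \<Longrightarrow> \<not> is_leaf t"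
  by (cases t) simp

lemma sn_bal: "CS \<noteq> [] \<Longrightarrow> length CS = Suc (length KS) \<Longrightarrow> \<forall>c\<in>set CS. bal h c \<Longrightarrow>
  (case split_node m KS CS of Fit t \<Rightarrow> bal (Suc h) t | Split l k r \<Rightarrow> bal (Suc h) l \<and> bal (Suc h) r)"
proof (cases "length KS \<le> 2*m")
  case False
  assume a: "CS \<noteq> []" "length CS = Suc (length KS)" "\<forall>c\<in>set CS. bal h c"
  hence "take (Suc m) CS \<noteq> []" "drop (Suc m) CS \<noteq> []" "m < length KS" using False by auto
  thus ?thesis using False a by (auto simp: split_node_def dest: in_set_takeD in_set_dropD)
qed (simp add: split_node_def)

lemma ins_bal: "wf m t \<Longrightarrow> bal h t \<Longrightarrow>
  (case fst (ins m x t) of Fit t' \<Rightarrow> bal h t' | Split l k r \<Rightarrow> bal h l \<and> bal h r)"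
proof (induction t arbitrary: x h)
  case (Node ks cs)
  show ?case
  proof (cases "cs = []")
    case True
    hence "h = 0" using Node.prems by (cases h) auto
    thus ?thesis using True by (simp add: ins_leaf split_node_def)
  next
    case False
    then obtain h' where h: "h = Suc h'" using Node.prems by (cases h) auto
    define i where "i = length (filter (\<lambda>k. k < x) ks)"
    have ni: "min (length (filter (\<lambda>k. k < x) ks)) (length cs - 1) = i" "i < length cs"
      "length cs = Suc (length ks)"
      using node_i[of m ks cs x, OF Node.prems(1) False] node_len[OF Node.prems(1) False]
      by (simp_all add: i_def)
    have c_in: "cs!i \<in> set cs" using ni by simp
    have wfs: "\<forall>c\<in>set cs. wf m c" using Node.prems False by simp
    have bals: "\<forall>c\<in>set cs. bal h' c" using Node.prems h by simp
    have IH: "case fst (ins m x (cs!i)) of Fit t' \<Rightarrow> bal h' t' | Split l k r \<Rightarrow> bal h' l \<and> bal h' r"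
      using Node.IH[OF c_in] wfs bals c_in by blast
    obtain res med where rm: "ins m x (cs!i) = (res, med)" by force
    note insn = ins_node[OF False ni(1)]
    show ?thesis
    proof (cases res)
      case (Fit c')
      thus ?thesis using rm False IH bals h ni by (auto simp: insn dest: set_update_subset_insert[THEN subsetD])
    next
      case (Split l k r)
      have CS: "take i cs @ l # r # drop (Suc i) cs \<noteq> []"
        "length (take i cs @ l # r # drop (Suc i) cs) = Suc (length (take i ks @ k # drop i ks))"
        "\<forall>c\<in>set (take i cs @ l # r # drop (Suc i) cs). bal h' c"
        using ni IH rm Split bals by (auto dest: in_set_takeD in_set_dropD)
      show ?thesis unfolding h using sn_bal[OF CS, of m] rm Split by (simp add: insn)
    qed
  qed
qed

lemma sn_prune_leaves: assumes "\<forall>c\<in>set CS. is_leaf c" shows "pr_r (split_node m KS CS) = split_node m KS []"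
proof -
  have "filter (\<lambda>c. \<not> is_leaf c) (take (Suc m) CS) = []" "filter (\<lambda>c. \<not> is_leaf c) (drop (Suc m) CS) = []"
    "filter (\<lambda>c. \<not> is_leaf c) CS = []"
    using assms by (auto simp: filter_empty_conv dest: in_set_takeD in_set_dropD)
  thus ?thesis by (simp add: split_node_def)
qed

lemma sn_prune_nonleaves: assumes "\<forall>c\<in>set CS. \<not> is_leaf c"
  shows "pr_r (split_node m KS CS) = split_node m KS (map prune CS)"
proof -
  have "filter (\<lambda>c. \<not> is_leaf c) (take (Suc m) CS) = take (Suc m) CS"
    "filter (\<lambda>c. \<not> is_leaf c) (drop (Suc m) CS) = drop (Suc m) CS"
    "filter (\<lambda>c. \<not> is_leaf c) CS = CS"
    using assms by (auto simp: filter_id_conv dest: in_set_takeD in_set_dropD)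
  thus ?thesis by (simp add: split_node_def take_map drop_map)
qed

lemma med_mem: "wf m t \<Longrightarrow> snd (ins m x t) = Some k \<Longrightarrow> k = x \<or> k \<in> set (inorder t)"
proof (induction t arbitrary: x)
  case (Node ks cs)
  show ?case
  proof (cases "cs = []")
    case True
    hence "k = insort x ks ! m" "m < length (insort x ks)" using Node.prems
      by (auto simp: ins_leaf split: if_splits)
    hence "k \<in> set (insort x ks)" by simp
    thus ?thesis using True by (simp add: set_insort_key)
  next
    case False
    define i where "i = length (filter (\<lambda>k. k < x) ks)"
    have ni: "min (length (filter (\<lambda>k. k < x) ks)) (length cs - 1) = i" "i < length cs"
      "length cs = Suc (length ks)"
      using node_i[of m ks cs x, OF Node.prems(1) False] node_len[OF Node.prems(1) False]
      by (simp_all add: i_def)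
    have c_in: "cs!i \<in> set cs" using ni by simp
    have wfc: "wf m (cs!i)" using Node.prems False c_in by simp
    obtain res med where rm: "ins m x (cs!i) = (res, med)" by force
    note insn = ins_node[OF False ni(1)]
    have "snd (ins m x (Node ks cs)) = med" using rm by (cases res) (simp_all add: insn)
    hence "snd (ins m x (cs!i)) = Some k" using Node.prems rm by simp
    hence "k = x \<or> k \<in> set (inorder (cs!i))" using Node.IH[OF c_in wfc] by blast
    moreover have "set (inorder (cs!i)) \<subseteq> set (inorder (Node ks cs))"
      using set_merge_X[of "map inorder cs" ks i] ni False by simp
    ultimately show ?thesis by blast
  qed
qed

lemma insort_take_drop: "sorted ks \<Longrightarrow>
  insort (k::nat) ks = take (length (filter (\<lambda>y. y < k) ks)) ks @ k # drop (length (filter (\<lambda>y. y < k) ks)) ks"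
proof (induction ks)
  case (Cons a ks)
  show ?case
  proof (cases "k \<le> a")
    case True
    hence "filter (\<lambda>y. y < k) (a # ks) = []" using Cons.prems by (auto simp: filter_empty_conv)
    thus ?thesis using True by simp
  next
    case False
    thus ?thesis using Cons by simp
  qed
qed simp

lemma ins_prune:
  "wf m t \<Longrightarrow> bal (Suc h) t \<Longrightarrow> sorted_wrt (<) (inorder t) \<Longrightarrow>
   (snd (ins m x t) = None \<longrightarrow> pr_r (fst (ins m x t)) = Fit (prune t)) \<and>
   (\<forall>k. snd (ins m x t) = Some k \<longrightarrow> pr_r (fst (ins m x t)) = fst (ins m k (prune t)))"
proof (induction t arbitrary: x h)
  case (Node ks cs)
  have False: "cs \<noteq> []" using Node.prems(2) by simp
  define i where "i = length (filter (\<lambda>k. k < x) ks)"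
  have ni: "min (length (filter (\<lambda>k. k < x) ks)) (length cs - 1) = i" "i < length cs"
    "length cs = Suc (length ks)"
    using node_i[of m ks cs x, OF Node.prems(1) False] node_len[OF Node.prems(1) False]
    by (simp_all add: i_def)
  have srt: "sorted_wrt (<) (merge (map inorder cs) ks)" using Node.prems False by simp
  have c_in: "cs!i \<in> set cs" using ni by simp
  have wfs: "\<forall>c\<in>set cs. wf m c" using Node.prems False by simp
  have wfc: "wf m (cs!i)" using wfs c_in by simp
  have sc: "sorted_wrt (<) (inorder (cs!i))"
    using subseq_X[of "map inorder cs" ks i] ni srt sorted_subseq by auto
  have balc: "\<forall>c\<in>set cs. bal h c" using Node.prems(2) by simp
  obtain res med where rm: "ins m x (cs!i) = (res, med)" by force
  note insn = ins_node[OF False ni(1)]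
  have kcnt: "length (filter (\<lambda>y. y < k) ks) = i" if "med = Some k" for k
  proof -
    have "k = x \<or> k \<in> set (inorder (cs!i))" using med_mem[OF wfc, of x k] rm that by simp
    thus ?thesis
    proof
      assume "k \<in> set (inorder (cs!i))"
      thus ?thesis using merge_interval[OF srt, of i k] ni by simp
    qed (simp add: i_def)
  qed
  have kss: "sorted ks"
    using subseq_K[of "map inorder cs" ks] ni srt sorted_subseq strict_sorted_imp_sorted by auto
  have medr: "snd (ins m x (Node ks cs)) = med" using rm by (cases res) (simp_all add: insn)
  show ?case
  proof (cases h)
    case 0
    hence leaves: "\<forall>c\<in>set cs. is_leaf c" using balc bal_leaf by auto
    have pt: "prune (Node ks cs) = Node ks []" using leaves by (simp add: filter_False)
    obtain cks ccs where c: "cs!i = Node cks ccs" by (cases "cs!i")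
    hence ccs: "ccs = []" using leaves c_in by fastforce
    show ?thesis
    proof (cases "length (insort x cks) > 2*m")
      case False
      hence r: "res = Fit (Node (insort x cks) [])" "med = None"
        using rm c ccs by (simp_all add: ins_leaf split_node_def)
      have "\<forall>c\<in>set (cs[i := Node (insort x cks) []]). is_leaf c"
        using leaves by (auto dest: set_update_subset_insert[THEN subsetD])
      hence "prune (Node ks (cs[i := Node (insort x cks) []])) = Node ks []" by (simp add: filter_False)
      thus ?thesis using r rm pt medr by (simp add: insn)
    next
      case True
      define ks' where "ks' = insort x cks"
      have r: "res = Split (Node (take m ks') []) (ks'!m) (Node (drop (Suc m) ks') [])" "med = Some (ks'!m)"
        using rm c ccs True by (simp_all add: ins_leaf split_node_def ks'_def)
      have CSl: "\<forall>c\<in>set (take i cs @ Node (take m ks') [] # Node (drop (Suc m) ks') [] # drop (Suc i) cs). is_leaf c"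
        using leaves by (auto dest: in_set_takeD in_set_dropD)
      have ik: "insort (ks'!m) ks = take i ks @ ks'!m # drop i ks"
        using insort_take_drop[OF kss, of "ks'!m"] kcnt[OF r(2)] by simp
      show ?thesis using r rm medr pt sn_prune_leaves[OF CSl] ik by (simp add: insn ins_leaf)
    qed
  next
    case (Suc h')
    hence nonl: "\<forall>c\<in>set cs. \<not> is_leaf c" using balc bal_nonleaf by auto
    have pt: "prune (Node ks cs) = Node ks (map prune cs)" using nonl by (simp add: filter_True)
    have balci: "bal (Suc h') (cs!i)" using balc c_in Suc by simp
    note IH = Node.IH[OF c_in wfc balci sc, of x]
    have BR: "case res of Fit t' \<Rightarrow> bal (Suc h') t' | Split l k r \<Rightarrow> bal (Suc h') l \<and> bal (Suc h') r"
      using ins_bal[OF wfc balci, of x] rm by simp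
    have F2: "map prune cs \<noteq> []" using False by simp
    have pci: "map prune cs ! i = prune (cs!i)" using ni by simp
    have insp: "ins m k (prune (Node ks cs)) = (case ins m k (prune (cs!i)) of
              (Fit c, med) \<Rightarrow> (Fit (Node ks ((map prune cs)[i := c])), med)
            | (Split l k r, med) \<Rightarrow>
                (split_node m (take i ks @ k # drop i ks)
                              (take i (map prune cs) @ l # r # drop (Suc i) (map prune cs)), med))"
      if "med = Some k" for k
      using ins_node[OF F2, of k ks i m] kcnt[OF that] ni pt pci by simp
    show ?thesis
    proof (cases res)
      case (Fit c')
      have c'nl: "\<not> is_leaf c'" using BR Fit bal_nonleaf by simp
      have "\<forall>c\<in>set (cs[i := c']). \<not> is_leaf c"
        using nonl c'nl by (auto dest: set_update_subset_insert[THEN subsetD])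
      hence pr: "pr_r (fst (ins m x (Node ks cs))) = Fit (Node ks ((map prune cs)[i := prune c']))"
        using rm Fit by (simp add: insn filter_True map_update)
      show ?thesis
      proof (intro conjI allI impI)
        assume "snd (ins m x (Node ks cs)) = None"
        hence "prune c' = prune (cs!i)" using IH rm Fit medr by simp
        thus "pr_r (fst (ins m x (Node ks cs))) = Fit (prune (Node ks cs))"
          using pr pt pci by (metis list_update_id)
      next
        fix k assume "snd (ins m x (Node ks cs)) = Some k"
        hence mk: "med = Some k" using medr by simp
        hence "Fit (prune c') = fst (ins m k (prune (cs!i)))" using IH rm Fit by simp
        then obtain med2 where "ins m k (prune (cs!i)) = (Fit (prune c'), med2)"
          by (metis prod.collapse)
        thus "pr_r (fst (ins m x (Node ks cs))) = fst (ins m k (prune (Node ks cs)))"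
          using pr insp[OF mk] by simp
      qed
    next
      case (Split l k0 r)
      have lr: "\<not> is_leaf l" "\<not> is_leaf r" using BR Split bal_nonleaf by auto
      have CSn: "\<forall>c\<in>set (take i cs @ l # r # drop (Suc i) cs). \<not> is_leaf c"
        using nonl lr by (auto dest: in_set_takeD in_set_dropD)
      have pr: "pr_r (fst (ins m x (Node ks cs))) = split_node m (take i ks @ k0 # drop i ks)
          (take i (map prune cs) @ prune l # prune r # drop (Suc i) (map prune cs))"
        using rm Split sn_prune_nonleaves[OF CSn] by (simp add: insn take_map drop_map)
      have "med \<noteq> None"
      proof
        assume "med = None"
        hence "snd (ins m x (cs!i)) = None" using rm by simp
        then obtain t' where "fst (ins m x (cs!i)) = Fit t'" using ins_ik[OF wfc, of x] by blast
        thus False using rm Split by simp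
      qed
      then obtain k where mk: "med = Some k" by blast
      hence "Split (prune l) k0 (prune r) = fst (ins m k (prune (cs!i)))" using IH rm Split by simp
      then obtain med2 where "ins m k (prune (cs!i)) = (Split (prune l) k0 (prune r), med2)"
        by (metis prod.collapse)
      hence "pr_r (fst (ins m x (Node ks cs))) = fst (ins m k (prune (Node ks cs)))"
        using pr insp[OF mk] by simp
      thus ?thesis using medr mk by simp
    qed
  qed
qed

lemma bal_top: "wf m t \<Longrightarrow> bal h t \<Longrightarrow> bal h (fst (insert_key m x t)) \<or> bal (Suc h) (fst (insert_key m x t))"
proof (cases "ins m x t")
  case (Pair r med)
  assume "wf m t" "bal h t"
  thus ?thesis using ins_bal[of m t h x] Pair by (cases r) (auto simp: insert_key_def)
qed

lemma step_PP: assumes "wf m t" "bal h t" "sorted_wrt (<) (inorder t)" "1 \<le> m"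
  shows "PP (fst (insert_key m x t)) =
    (case snd (insert_key m x t) of None \<Rightarrow> PP t | Some k \<Rightarrow> fst (insert_key m k (PP t)))"
proof (cases h)
  case 0
  then obtain ks where t: "t = Node ks []" using assms(2) by (cases t) auto
  show ?thesis
  proof (cases "length (insort x ks) > 2*m")
    case True
    thus ?thesis using t assms(4) by (simp add: insert_key_def ins_leaf split_node_def PP_def)
  next
    case False
    thus ?thesis using t by (simp add: insert_key_def ins_leaf split_node_def PP_def)
  qed
next
  case (Suc h')
  have b: "bal (Suc h') t" using assms(2) Suc by simp
  have nl: "\<not> is_leaf t" using b bal_nonleaf by simp
  note P = ins_prune[OF assms(1) b assms(3), of x]
  obtain r med where rm: "ins m x t = (r, med)" by force
  have BR: "case r of Fit t' \<Rightarrow> bal (Suc h') t' | Split l k r \<Rightarrow> bal (Suc h') l \<and> bal (Suc h') r"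
    using ins_bal[OF assms(1) b, of x] rm by simp
  show ?thesis
  proof (cases r)
    case (Fit t')
    have nl': "\<not> is_leaf t'" using BR Fit bal_nonleaf by simp
    show ?thesis
    proof (cases med)
      case None
      thus ?thesis using P rm Fit nl nl' by (simp add: insert_key_def PP_def)
    next
      case (Some k)
      hence "Fit (prune t') = fst (ins m k (prune t))" using P rm Fit by simp
      then obtain med2 where "ins m k (prune t) = (Fit (prune t'), med2)" by (metis prod.collapse)
      thus ?thesis using rm Fit nl nl' Some by (simp add: insert_key_def PP_def)
    qed
  next
    case (Split l k0 r')
    have lr: "\<not> is_leaf l" "\<not> is_leaf r'" using BR Split bal_nonleaf by auto
    have "med \<noteq> None"
    proof
      assume "med = None"
      hence "snd (ins m x t) = None" using rm by simp
      then obtain t' where "fst (ins m x t) = Fit t'" using ins_ik[OF assms(1), of x] by blast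
      thus False using rm Split by simp
    qed
    then obtain k where mk: "med = Some k" by blast
    hence "Split (prune l) k0 (prune r') = fst (ins m k (prune t))" using P rm Split by simp
    then obtain med2 where "ins m k (prune t) = (Split (prune l) k0 (prune r'), med2)" by (metis prod.collapse)
    thus ?thesis using rm Split nl lr mk by (simp add: insert_key_def PP_def)
  qed
qed

lemma claim2_gen: "wf m t \<Longrightarrow> bal h t \<Longrightarrow> sorted_wrt (<) (inorder t) \<Longrightarrow> distinct xs \<Longrightarrow>
  set xs \<inter> set (inorder t) = {} \<Longrightarrow> 1 \<le> m \<Longrightarrow>
  PP (foldl (\<lambda>t x. fst (insert_key m x t)) t xs) =
    foldl (\<lambda>t x. fst (insert_key m x t)) (PP t) (List.map_filter snd (steps m t xs))"
proof (induction xs arbitrary: t h)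
  case Nil thus ?case by (simp add: map_filter_simps)
next
  case (Cons x xs)
  define t1 where "t1 = fst (insert_key m x t)"
  have xt: "x \<notin> set (inorder t)" using Cons.prems by auto
  note it = step_inv[OF Cons.prems(1,3) xt, folded t1_def]
  obtain h1 where b1: "bal h1 t1" using bal_top[OF Cons.prems(1,2), of x] t1_def by blast
  have IH: "PP (foldl (\<lambda>t x. fst (insert_key m x t)) t1 xs) =
      foldl (\<lambda>t x. fst (insert_key m x t)) (PP t1) (List.map_filter snd (steps m t1 xs))"
    using Cons.IH[OF it(1) b1 it(3)] Cons.prems it(2) by (auto simp: set_insort_key)
  have mf: "List.map_filter snd (steps m t (x#xs)) = (case snd (insert_key m x t) of None \<Rightarrow> [] | Some k \<Rightarrow> [k]) @ List.map_filter snd (steps m t1 xs)"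
    by (simp add: steps_Cons' map_filter_simps t1_def split: option.split)
  have sp: "PP t1 = (case snd (insert_key m x t) of None \<Rightarrow> PP t | Some k \<Rightarrow> fst (insert_key m k (PP t)))"
    unfolding t1_def using step_PP[OF Cons.prems(1,2,3,6)] .
  show ?case using IH mf sp by (cases "snd (insert_key m x t)") (simp_all add: t1_def)
qed

theorem lemma3p1:
  fixes m n :: nat and p p' :: "nat list"
  assumes "m \<ge> 1"
    and "is_perm n p" and "is_perm n p'"
    and "height (final_tree m p) \<ge> 1"
    and "history m p = history m p'"
  shows "pi1 m p = pi1 m p' \<and>
         shape (final_tree m (pi1 m p)) = shape (prune (final_tree m p))"
proof -
  have d: "distinct p" "distinct p'" using assms(2,3) by (simp_all add: is_perm_def)
  have "oiso (ikeys (Node [] []) @ List.map_filter snd (steps m (Node [] []) p))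
             (ikeys (Node [] []) @ List.map_filter snd (steps m (Node [] []) p'))"
    by (rule claim1_gen) (use d assms(1,5) in \<open>auto simp: history_def\<close>)
  hence c1: "pi1 m p = pi1 m p'" by (simp add: pi1_def leaf_medians_def oiso_std)
  define M where "M = leaf_medians m p"
  define g where "g = (\<lambda>x. card {y \<in> set M. y \<le> x})"
  have stdg: "pi1 m p = map g M" by (simp add: pi1_def std_def g_def M_def)
  have smog: "smo (set M \<union> kset (Node [] [])) g"
    unfolding smo_def
  proof (intro ballI impI)
    fix a b assume ab: "a \<in> set M \<union> kset (Node [] [])" "b \<in> set M \<union> kset (Node [] [])" "a < b"
    have bM: "b \<in> set M" using ab by simp
    have ne: "{y \<in> set M. y \<le> a} \<noteq> {y \<in> set M. y \<le> b}"
    proof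
      assume eq: "{y \<in> set M. y \<le> a} = {y \<in> set M. y \<le> b}"
      have "b \<in> {y \<in> set M. y \<le> b}" using bM by simp
      hence "b \<le> a" using eq by blast
      thus False using ab by simp
    qed
    have "{y \<in> set M. y \<le> a} \<subseteq> {y \<in> set M. y \<le> b}" using ab by auto
    hence "{y \<in> set M. y \<le> a} \<subset> {y \<in> set M. y \<le> b}" using ne by blast
    thus "g a < g b" unfolding g_def by (intro psubset_card_mono) auto
  qed
  have "final_tree m (pi1 m p) = mapk g (final_tree m M)"
    unfolding final_tree_def stdg using foldl_map[OF smog, of m] by simp
  hence s1: "shape (final_tree m (pi1 m p)) = shape (final_tree m M)" by (simp add: shape_mapk)
  have "PP (final_tree m p) = final_tree m M"
    using claim2_gen[of m "Node [] []" 0 p] d assms(1)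
    by (simp add: final_tree_def M_def leaf_medians_def PP_def)
  moreover have "\<not> is_leaf (final_tree m p)"
    using assms(4) by (cases "final_tree m p") (auto split: if_splits)
  ultimately have "prune (final_tree m p) = final_tree m M" by (simp add: PP_def)
  thus ?thesis using c1 s1 by simp
qed

end
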